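(* Let $b_1\ge b_2\ge\cdots\ge b_m>0$ be real numbers and let $k\in[m-1]$. Then $$1-\frac km\le\delta_k:=\frac{\sum_{S\subset[m-1],|S|=k}\mathbf{b}^S}{\sum_{S\subset[m],|S|=k}\mathbf{b}^S}\le\min\Big\{1,\frac{b_1}{b_m}\Big(1-\frac km\Big)\Big\}.$$
   Context: For $S\subset[m]$, $\mathbf{b}^S=\prod_{i\in S}b_i$. *)

theory Defs
  imports Main "HOL.Real"
begin

definition esym :: "(nat \<Rightarrow> real) \<Rightarrow> nat \<Rightarrow> nat \<Rightarrow> real" where
  "esym b n k = (\<Sum>S\<in>{S. S \<subseteq> {1..n} \<and> card S = k}. \<Prod>i\<in>S. b i)"

definition delta :: "(nat \<Rightarrow> real) \<Rightarrow> nat \<Rightarrow> nat \<Rightarrow> real" where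
  "delta b m k = esym b (m - 1) k / esym b m k"

end

theory Submission
  imports Defs
begin

definition ee :: "(nat \<Rightarrow> real) \<Rightarrow> nat set \<Rightarrow> nat \<Rightarrow> real" where
  "ee b A k = (\<Sum>S\<in>{S. S \<subseteq> A \<and> card S = k}. \<Prod>i\<in>S. b i)"

lemma fin_subsets: "finite A \<Longrightarrow> finite {S. S \<subseteq> A \<and> card S = k}"
  by (rule finite_subset[of _ "Pow A"]) auto

lemma esym_ee: "esym b n k = ee b {1..n} k"
  unfolding esym_def ee_def by simp

lemma ee_insert:
  assumes "finite A" "a \<notin> A"
  shows "ee b (insert a A) (Suc k) = ee b A (Suc k) + b a * ee b A k"
proof -
  have fin: "finite {S. S \<subseteq> A \<and> card S = j}" for j
    using assms(1) by (rule fin_subsets)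
  have split: "{S. S \<subseteq> insert a A \<and> card S = Suc k} =
     {S. S \<subseteq> A \<and> card S = Suc k} \<union> insert a ` {S. S \<subseteq> A \<and> card S = k}"
  proof (rule set_eqI, rule iffI)
    fix S assume S: "S \<in> {S. S \<subseteq> insert a A \<and> card S = Suc k}"
    show "S \<in> {S. S \<subseteq> A \<and> card S = Suc k} \<union> insert a ` {S. S \<subseteq> A \<and> card S = k}"
    proof (cases "a \<in> S")
      case True
      have "finite S" using S assms(1) finite_subset by blast
      then have "S = insert a (S - {a})" "card (S - {a}) = k" "S - {a} \<subseteq> A"
        using True S by auto
      then show ?thesis by blast
    next
      case False then show ?thesis using S by auto
    qed
  next
    fix S assume "S \<in> {S. S \<subseteq> A \<and> card S = Suc k} \<union> insert a ` {S. S \<subseteq> A \<and> card S = k}"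
    then show "S \<in> {S. S \<subseteq> insert a A \<and> card S = Suc k}"
    proof
      assume "S \<in> insert a ` {S. S \<subseteq> A \<and> card S = k}"
      then obtain T where T: "T \<subseteq> A" "card T = k" "S = insert a T" by auto
      have "finite T" using T assms(1) finite_subset by blast
      moreover have "a \<notin> T" using T assms(2) by blast
      ultimately show ?thesis using T by auto
    qed auto
  qed
  have disj: "{S. S \<subseteq> A \<and> card S = Suc k} \<inter> insert a ` {S. S \<subseteq> A \<and> card S = k} = {}"
    using assms(2) by auto
  have inj: "inj_on (insert a) {S. S \<subseteq> A \<and> card S = k}"
  proof (rule inj_onI)
    fix X Y assume X: "X \<in> {S. S \<subseteq> A \<and> card S = k}" and Y: "Y \<in> {S. S \<subseteq> A \<and> card S = k}"
      and eq: "insert a X = insert a Y"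
    have "a \<notin> X" "a \<notin> Y" using X Y assms(2) by auto
    then show "X = Y" using eq by (metis Diff_insert_absorb)
  qed
  have "ee b (insert a A) (Suc k) = ee b A (Suc k) +
      (\<Sum>S\<in>insert a ` {S. S \<subseteq> A \<and> card S = k}. \<Prod>i\<in>S. b i)"
    unfolding ee_def split by (rule sum.union_disjoint) (use fin disj in auto)
  also have "(\<Sum>S\<in>insert a ` {S. S \<subseteq> A \<and> card S = k}. \<Prod>i\<in>S. b i)
      = (\<Sum>S\<in>{S. S \<subseteq> A \<and> card S = k}. \<Prod>i\<in>insert a S. b i)"
    by (rule sum.reindex_cong[OF inj refl]) simp
  also have "\<dots> = (\<Sum>S\<in>{S. S \<subseteq> A \<and> card S = k}. b a * (\<Prod>i\<in>S. b i))"
  proof (rule sum.cong[OF refl])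
    fix S assume "S \<in> {S. S \<subseteq> A \<and> card S = k}"
    then have "finite S" "a \<notin> S" using assms finite_subset by auto
    then show "(\<Prod>i\<in>insert a S. b i) = b a * (\<Prod>i\<in>S. b i)" by simp
  qed
  also have "\<dots> = b a * ee b A k" unfolding ee_def by (simp add: sum_distrib_left)
  finally show ?thesis .
qed

lemma ee_nonneg:
  assumes "\<And>i. i \<in> A \<Longrightarrow> b i > 0"
  shows "ee b A k \<ge> 0"
  unfolding ee_def
proof (rule sum_nonneg)
  fix S assume S: "S \<in> {S. S \<subseteq> A \<and> card S = k}"
  show "0 \<le> (\<Prod>i\<in>S. b i)"
  proof (rule prod_nonneg)
    fix i assume "i \<in> S"
    then have "i \<in> A" using S by blast
    then show "0 \<le> b i" using assms[of i] by simp
  qed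
qed

lemma ee_pos:
  assumes "finite A" "\<And>i. i \<in> A \<Longrightarrow> b i > 0" "k \<le> card A"
  shows "ee b A k > 0"
proof -
  obtain S where S: "S \<subseteq> A" "card S = k" using obtain_subset_with_card_n[OF assms(3)] by blast
  have fin: "finite {S. S \<subseteq> A \<and> card S = k}"
    using assms(1) by (rule fin_subsets)
  have pS: "0 < (\<Prod>i\<in>S. b i)"
  proof (rule prod_pos)
    fix i assume "i \<in> S"
    then have "i \<in> A" using S by blast
    then show "0 < b i" using assms(2)[of i] by simp
  qed
  have "(\<Prod>i\<in>S. b i) \<le> ee b A k" unfolding ee_def
  proof (rule member_le_sum)
    show "S \<in> {S. S \<subseteq> A \<and> card S = k}" using S by simp
    show "finite {S. S \<subseteq> A \<and> card S = k}" by (rule fin)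
    fix T assume "T \<in> {S. S \<subseteq> A \<and> card S = k} - {S}"
    then have "T \<subseteq> A" by simp
    show "0 \<le> (\<Prod>i\<in>T. b i)"
    proof (rule prod_nonneg)
      fix i assume "i \<in> T"
      then have "i \<in> A" using \<open>T \<subseteq> A\<close> by blast
      then show "0 \<le> b i" using assms(2)[of i] by simp
    qed
  qed
  then show ?thesis using pS by linarith
qed

lemma ee_sum_remove:
  assumes "finite A" "k \<le> card A"
  shows "(\<Sum>j\<in>A. ee b (A - {j}) k) = real (card A - k) * ee b A k"
proof -
  let ?F = "{S. S \<subseteq> A \<and> card S = k}"
  have fin: "finite ?F"
    using assms(1) by (rule fin_subsets)
  have "ee b (A - {j}) k = (\<Sum>S\<in>?F. if j \<notin> S then (\<Prod>i\<in>S. b i) else 0)" for j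
  proof -
    have "{S \<in> ?F. j \<notin> S} = {S. S \<subseteq> A - {j} \<and> card S = k}" by auto
    then show ?thesis unfolding ee_def sum.inter_filter[OF fin, symmetric] by simp
  qed
  then have "(\<Sum>j\<in>A. ee b (A - {j}) k) =
     (\<Sum>j\<in>A. \<Sum>S\<in>?F. if j \<notin> S then (\<Prod>i\<in>S. b i) else 0)" by simp
  also have "\<dots> = (\<Sum>S\<in>?F. \<Sum>j\<in>A. if j \<notin> S then (\<Prod>i\<in>S. b i) else 0)"
    by (rule sum.swap)
  also have "\<dots> = (\<Sum>S\<in>?F. real (card A - k) * (\<Prod>i\<in>S. b i))"
  proof (rule sum.cong[OF refl])
    fix S assume S: "S \<in> ?F"
    have "(\<Sum>j\<in>A. if j \<notin> S then (\<Prod>i\<in>S. b i) else 0) = real (card (A - S)) * (\<Prod>i\<in>S. b i)"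
    proof -
      have "{j \<in> A. j \<notin> S} = A - S" by auto
      then show ?thesis using sum.inter_filter[OF assms(1), of "\<lambda>_. \<Prod>i\<in>S. b i" "\<lambda>j. j \<notin> S", symmetric]
        by simp
    qed
    also have "card (A - S) = card A - k"
    proof -
      have "finite S" using S assms(1) finite_subset by auto
      then show ?thesis using S by (simp add: card_Diff_subset)
    qed
    finally show "(\<Sum>j\<in>A. if j \<notin> S then (\<Prod>i\<in>S. b i) else 0) = real (card A - k) * (\<Prod>i\<in>S. b i)" .
  qed
  also have "\<dots> = real (card A - k) * ee b A k" unfolding ee_def by (simp add: sum_distrib_left)
  finally show ?thesis .
qed


lemma ee_compare:
  assumes "finite A" "j \<in> A" "m \<in> A" "j \<noteq> m" "b m \<le> b j"
    and posb: "\<And>i. i \<in> A \<Longrightarrow> b i > 0"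
  shows "ee b (A - {j}) (Suc k) \<le> ee b (A - {m}) (Suc k)"
    "b m * ee b (A - {m}) (Suc k) \<le> b j * ee b (A - {j}) (Suc k)"
proof -
  define B where "B = A - {j, m}"
  have fB: "finite B" using assms(1) B_def by simp
  have 1: "A - {j} = insert m B" "A - {m} = insert j B" "m \<notin> B" "j \<notin> B"
    using assms B_def by auto
  have e1: "ee b (A - {j}) (Suc k) = ee b B (Suc k) + b m * ee b B k"
    using 1 ee_insert[OF fB] by simp
  have e2: "ee b (A - {m}) (Suc k) = ee b B (Suc k) + b j * ee b B k"
    using 1 ee_insert[OF fB] by simp
  have n1: "ee b B k \<ge> 0" "ee b B (Suc k) \<ge> 0"
    using posb B_def by (auto intro!: ee_nonneg)
  show "ee b (A - {j}) (Suc k) \<le> ee b (A - {m}) (Suc k)"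
    unfolding e1 e2 using n1 assms(5) by (simp add: mult_right_mono)
  show "b m * ee b (A - {m}) (Suc k) \<le> b j * ee b (A - {j}) (Suc k)"
    unfolding e1 e2 using n1 assms(5) by (simp add: algebra_simps mult_right_mono)
qed

theorem lemma2p4:
  fixes b :: "nat \<Rightarrow> real" and m k :: nat
  assumes mono: "\<And>i j. 1 \<le> i \<Longrightarrow> i \<le> j \<Longrightarrow> j \<le> m \<Longrightarrow> b j \<le> b i"
    and pos: "b m > 0"
    and k: "1 \<le> k" "k \<le> m - 1"
  shows "1 - real k / real m \<le> delta b m k \<and>
         delta b m k \<le> min 1 ((b 1 / b m) * (1 - real k / real m))"
proof -
  define A where "A = {1..m}"
  obtain k' where kk: "k = Suc k'" using k by (cases k) auto
  have m2: "m \<ge> 2" using k by linarith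
  have fA: "finite A" and cA: "card A = m" and mA: "m \<in> A" and oneA: "1 \<in> A"
    using m2 by (auto simp: A_def)
  have posA: "\<And>i. i \<in> A \<Longrightarrow> b i > 0"
    using mono pos by (auto simp: A_def intro: less_le_trans)
  have Am: "A - {m} = {1..m-1}" using m2 by (auto simp: A_def)
  define E where "E = ee b A k"
  define E' where "E' = ee b (A - {m}) k"
  have dE: "delta b m k = E' / E"
    unfolding delta_def esym_ee E_def E'_def Am unfolding A_def ..
  have Ains: "A = insert m (A - {m})" using mA by auto
  have E_split: "E = E' + b m * ee b (A - {m}) k'"
    unfolding E_def E'_def kk by (subst Ains) (rule ee_insert, use fA in auto)
  have cAm: "card (A - {m}) = m - 1" using fA cA mA by simp
  have Epos': "ee b (A - {m}) k' > 0"
    using fA cAm k kk posA by (intro ee_pos) auto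
  have E'pos: "E' > 0" unfolding E'_def
    using fA cAm k kk posA by (intro ee_pos) auto
  have Epos: "E > 0" using E_split Epos' E'pos pos by (simp add: add_pos_pos)
  have sumid: "(\<Sum>j\<in>A. ee b (A - {j}) k) = real (m - k) * E"
    using ee_sum_remove[OF fA, of k b] k cA unfolding E_def by simp
  have mk: "real (m - k) = real m - real k" using k by simp
  have mpos: "real m > 0" using m2 by simp
  have "(\<Sum>j\<in>A. ee b (A - {j}) k) \<le> (\<Sum>j\<in>A. E')"
  proof (rule sum_mono)
    fix j assume j: "j \<in> A"
    show "ee b (A - {j}) k \<le> E'"
    proof (cases "j = m")
      case False
      have "b m \<le> b j" using j mono by (auto simp: A_def)
      then show ?thesis unfolding E'_def kk
        by (intro ee_compare(1)[OF fA j mA False]) (use posA in auto)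
    qed (simp add: E'_def)
  qed
  then have low: "real (m - k) * E \<le> real m * E'" using sumid cA by simp
  have L: "1 - real k / real m \<le> E' / E"
  proof -
    have "1 - real k / real m = real (m - k) / real m" using mk mpos by (simp add: field_simps)
    also have "\<dots> \<le> E' / E"
    proof -
      have "real (m - k) * E \<le> E' * real m" using low by (simp only: mult.commute)
      then show ?thesis using Epos mpos by (simp add: frac_le_eq divide_le_eq le_divide_eq)
    qed
    finally show ?thesis .
  qed
  have "(\<Sum>j\<in>A. b m * E') \<le> (\<Sum>j\<in>A. b 1 * ee b (A - {j}) k)"
  proof (rule sum_mono)
    fix j assume j: "j \<in> A"
    have b1j: "b j \<le> b 1" using j mono by (auto simp: A_def)
    have nn: "ee b (A - {j}) k \<ge> 0" using posA by (intro ee_nonneg) auto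
    have "b m * E' \<le> b j * ee b (A - {j}) k"
    proof (cases "j = m")
      case False
      have "b m \<le> b j" using j mono by (auto simp: A_def)
      then show ?thesis unfolding E'_def kk
        by (intro ee_compare(2)[OF fA j mA False]) (use posA in auto)
    qed (simp add: E'_def)
    also have "\<dots> \<le> b 1 * ee b (A - {j}) k" using b1j nn by (rule mult_right_mono)
    finally show "b m * E' \<le> b 1 * ee b (A - {j}) k" .
  qed
  then have up: "real m * (b m * E') \<le> b 1 * (real (m - k) * E)"
    using sumid cA by (simp add: sum_distrib_left[symmetric])
  have U1: "E' / E \<le> 1" using E_split Epos' pos Epos by (simp add: divide_simps)
  have U2: "E' / E \<le> (b 1 / b m) * (1 - real k / real m)"
  proof -
    have "(b 1 / b m) * (1 - real k / real m) = b 1 * real (m - k) / (b m * real m)"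
      using mk mpos pos by (simp add: field_simps)
    moreover have "E' / E \<le> b 1 * real (m - k) / (b m * real m)"
    proof -
      have "E' * (b m * real m) \<le> b 1 * real (m - k) * E" using up by (simp only: mult_ac)
      then show ?thesis using Epos mpos pos by (simp add: divide_le_eq le_divide_eq)
    qed
    ultimately show ?thesis by simp
  qed
  show ?thesis using L U1 U2 dE by simp
qed

end
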